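(* Every cograph is spectrally threshold dominated.
   Context: All graphs are finite and simple. Cographs are defined recursively: the single-node graph $K_1$ is a cograph; the disjoint union of cographs is a cograph; the complement of a cograph is a cograph. For a graph $G$ on $n$ nodes, the Laplacian eigenvalues (eigenvalues of $L(G)=D(G)-A(G)$) are $\lambda_1(G)\ge\dots\ge\lambda_n(G)=0$. A threshold graph is a graph obtainable from the empty graph by repeatedly adding a new node that is either isolated or adjacent to all previously added nodes. A graph $G$ on $n$ nodes with $m$ edges is spectrally threshold dominated if for each $k\in\{1,\dots,n\}$ there is a threshold graph $T_k$ on $n$ nodes with $m$ edges satisfying $\sum_{i=1}^k\lambda_i(T_k)\ge\sum_{i=1}^k\lambda_i(G)$. *)

theory Defs
  imports "Jordan_Normal_Form.Char_Poly"
begin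

definition simple_graph :: "'a set \<Rightarrow> ('a \<Rightarrow> 'a \<Rightarrow> bool) \<Rightarrow> bool" where
  "simple_graph V E \<longleftrightarrow> finite V \<and> (\<forall>u v. E u v \<longrightarrow> u \<in> V \<and> v \<in> V \<and> u \<noteq> v \<and> E v u)"

definition graph_union :: "('a \<Rightarrow> 'a \<Rightarrow> bool) \<Rightarrow> ('a \<Rightarrow> 'a \<Rightarrow> bool) \<Rightarrow> ('a \<Rightarrow> 'a \<Rightarrow> bool)" where
  "graph_union E1 E2 = (\<lambda>u v. E1 u v \<or> E2 u v)"

definition graph_compl :: "'a set \<Rightarrow> ('a \<Rightarrow> 'a \<Rightarrow> bool) \<Rightarrow> ('a \<Rightarrow> 'a \<Rightarrow> bool)" where
  "graph_compl V E = (\<lambda>u v. u \<in> V \<and> v \<in> V \<and> u \<noteq> v \<and> \<not> E u v)"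

inductive cograph :: "'a set \<Rightarrow> ('a \<Rightarrow> 'a \<Rightarrow> bool) \<Rightarrow> bool" where
  single: "cograph {v} (\<lambda>_ _. False)"
| union: "cograph V1 E1 \<Longrightarrow> cograph V2 E2 \<Longrightarrow> V1 \<inter> V2 = {} \<Longrightarrow>
            cograph (V1 \<union> V2) (graph_union E1 E2)"
| compl: "cograph V E \<Longrightarrow> cograph V (graph_compl V E)"

inductive threshold :: "'a set \<Rightarrow> ('a \<Rightarrow> 'a \<Rightarrow> bool) \<Rightarrow> bool" where
  empty: "threshold {} (\<lambda>_ _. False)"
| isolated: "threshold V E \<Longrightarrow> v \<notin> V \<Longrightarrow> threshold (insert v V) E"
| dominating: "threshold V E \<Longrightarrow> v \<notin> V \<Longrightarrow>
     threshold (insert v V) (\<lambda>x y. E x y \<or> (x = v \<and> y \<in> V) \<or> (y = v \<and> x \<in> V))"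

definition num_edges :: "'a set \<Rightarrow> ('a \<Rightarrow> 'a \<Rightarrow> bool) \<Rightarrow> nat" where
  "num_edges V E = card {{u, v} | u v. u \<in> V \<and> v \<in> V \<and> E u v}"

definition degree :: "'a set \<Rightarrow> ('a \<Rightarrow> 'a \<Rightarrow> bool) \<Rightarrow> 'a \<Rightarrow> nat" where
  "degree V E u = card {v \<in> V. E u v}"

text \<open>Laplacian matrix L = D - A with respect to a fixed enumeration of V
  (the spectrum does not depend on the enumeration).\<close>
definition vertex_enum :: "'a set \<Rightarrow> nat \<Rightarrow> 'a" where
  "vertex_enum V = (SOME f. bij_betw f {0..<card V} V)"

definition laplacian :: "'a set \<Rightarrow> ('a \<Rightarrow> 'a \<Rightarrow> bool) \<Rightarrow> real mat" where
  "laplacian V E = (let f = vertex_enum V in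
     mat (card V) (card V) (\<lambda>(i, j).
       if i = j then real (degree V E (f i)) else if E (f i) (f j) then -1 else 0))"

definition lap_eigenvalues :: "'a set \<Rightarrow> ('a \<Rightarrow> 'a \<Rightarrow> bool) \<Rightarrow> real list" where
  "lap_eigenvalues V E = (THE ls. sorted_wrt (\<ge>) ls \<and>
      char_poly (laplacian V E) = (\<Prod>a\<leftarrow>ls. [:- a, 1:]))"

definition lap_top_sum :: "'a set \<Rightarrow> ('a \<Rightarrow> 'a \<Rightarrow> bool) \<Rightarrow> nat \<Rightarrow> real" where
  "lap_top_sum V E k = (\<Sum>i<k. lap_eigenvalues V E ! i)"

definition spectrally_threshold_dominated :: "'a set \<Rightarrow> ('a \<Rightarrow> 'a \<Rightarrow> bool) \<Rightarrow> bool" where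
  "spectrally_threshold_dominated V E \<longleftrightarrow>
     (\<forall>k \<in> {1..card V}. \<exists>(T :: nat set) F. threshold T F \<and> card T = card V \<and>
        num_edges T F = num_edges V E \<and> lap_top_sum T F k \<ge> lap_top_sum V E k)"

end

theory Submission
  imports Defs
begin


definition detf :: "nat \<Rightarrow> (nat \<Rightarrow> 'a) \<Rightarrow> ('a \<Rightarrow> 'a \<Rightarrow> real) \<Rightarrow> real" where
  "detf n g h = det (mat n n (\<lambda>(i,j). h (g i) (g j)))"

lemma signof_sq: "signof p * signof p = (1::'b::comm_ring_1)"
  by (cases p rule: sign_cases) auto

lemma det_perm_both:
  assumes A: "(A :: real mat) \<in> carrier_mat n n" and p: "p permutes {0..<n}"
  shows "det (mat n n (\<lambda>(i,j). A $$ (p i, p j))) = det A"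
proof -
  define A' where "A' = mat n n (\<lambda>(i,j). A $$ (i, p j))"
  have A'c: "A' \<in> carrier_mat n n" unfolding A'_def by auto
  have pn: "\<And>i. i < n \<Longrightarrow> p i < n" using p by (simp add: permutes_in_image)
  have 1: "mat n n (\<lambda>(i,j). A $$ (p i, p j)) = mat n n (\<lambda>(i,j). A' $$ (p i, j))"
    by (rule eq_matI, auto simp: A'_def pn)
  have 2: "det A' = signof p * det A"
  proof -
    have "det A' = det (transpose_mat A')" using det_transpose[OF A'c] by simp
    also have "transpose_mat A' = mat n n (\<lambda>(i,j). (transpose_mat A) $$ (p i, j))"
      by (rule eq_matI, insert A, auto simp: A'_def pn)
    also have "det \<dots> = signof p * det (transpose_mat A)"
      by (rule det_permute_rows[OF _ p], insert A, auto)
    also have "det (transpose_mat A) = det A" using det_transpose[OF A] .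
    finally show ?thesis .
  qed
  have "det (mat n n (\<lambda>(i,j). A $$ (p i, p j))) = signof p * det A'"
    unfolding 1 by (rule det_permute_rows[OF A'c p])
  also have "\<dots> = (signof p * signof p) * det A" unfolding 2 by simp
  finally show ?thesis by (simp add: signof_sq)
qed

lemma detf_bij:
  assumes f: "bij_betw f {0..<n} V" and g: "bij_betw g {0..<n} V"
  shows "detf n f h = detf n g h"
proof -
  define p where "p = (\<lambda>i. if i < n then inv_into {0..<n} f (g i) else i)"
  have gi: "\<And>i. i < n \<Longrightarrow> g i \<in> V" using g by (auto simp: bij_betw_def)
  have fp: "\<And>i. i < n \<Longrightarrow> f (p i) = g i"
    unfolding p_def using f gi by (simp add: bij_betw_inv_into_right)
  have pb: "bij_betw p {0..<n} {0..<n}"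
  proof -
    have "bij_betw (inv_into {0..<n} f \<circ> g) {0..<n} {0..<n}"
      by (rule bij_betw_trans[OF g bij_betw_inv_into[OF f]])
    moreover have "\<And>i. i \<in> {0..<n} \<Longrightarrow> p i = (inv_into {0..<n} f \<circ> g) i" by (auto simp: p_def)
    ultimately show ?thesis using bij_betw_cong by blast
  qed
  have pp: "p permutes {0..<n}"
    by (rule bij_imp_permutes[OF pb], auto simp: p_def)
  have pn: "\<And>i. i < n \<Longrightarrow> p i < n" using pp by (simp add: permutes_in_image)
  define A where "A = mat n n (\<lambda>(i,j). h (f i) (f j))"
  have "detf n g h = det (mat n n (\<lambda>(i,j). A $$ (p i, p j)))"
    unfolding detf_def by (rule arg_cong[where f=det], rule eq_matI, auto simp: A_def pn fp)
  also have "\<dots> = det A" by (rule det_perm_both[OF _ pp], auto simp: A_def)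
  finally show ?thesis unfolding A_def detf_def by simp
qed


lemma det_diag1:
  assumes "0 < n"
  shows "det (mat n n (\<lambda>(i,j). if i = j then (if i = 0 then c else 1) else 0)) = (c::real)"
proof -
  have "det (mat n n (\<lambda>(i,j). if i = j then (if i = 0 then c else 1) else 0)) =
     prod_list (diag_mat (mat n n (\<lambda>(i,j). if i = j then (if i = 0 then c else (1::real)) else 0)))"
    by (rule det_upper_triangular, auto simp: upper_triangular_def)
  also have "\<dots> = c"
  proof -
    have "diag_mat (mat n n (\<lambda>(i,j). if i = j then (if i = 0 then c else (1::real)) else 0))
      = c # map (\<lambda>_. 1) [1..<n]"
      unfolding diag_mat_def using assms by (simp add: upt_conv_Cons del: upt_Suc)
    moreover have "prod_list (map (\<lambda>_. (1::real)) xs) = 1" for xs :: "nat list" by (induct xs) auto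
    ultimately show ?thesis by simp
  qed
  finally show ?thesis .
qed

lemma det_plus_J:
  fixes A :: "real mat"
  assumes A: "A \<in> carrier_mat n n" and rs: "\<And>i. i < n \<Longrightarrow> (\<Sum>j<n. A $$ (i,j)) = c"
  shows "c * det (A + mat n n (\<lambda>_. 1)) = (c + real n) * det A"
proof (cases "n = 0")
  case True
  then show ?thesis using A by (simp add: det_def)
next
  case False
  hence n0: "0 < n" by auto
  define J where "J = (mat n n (\<lambda>_. 1) :: real mat)"
  define U where "U = (mat n n (\<lambda>(i,j). if i = j then 1 else if j = 0 then 1 else 0) :: real mat)"
  define W where "W = (mat n n (\<lambda>(i,j). if i = j then 1 else if i = 0 then 1 else 0) :: real mat)"
  define D where "D = (mat n n (\<lambda>(i,j). if i = j then (if i = 0 then c else 1) else 0) :: real mat)"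
  define D' where "D' = (mat n n (\<lambda>(i,j). if i = j then (if i = 0 then c + real n else 1) else 0) :: real mat)"
  define N where "N = (mat n n (\<lambda>(i,j). if j = 0 then 1 else A $$ (i,j)) :: real mat)"
  have c: "U \<in> carrier_mat n n" "W \<in> carrier_mat n n" "D \<in> carrier_mat n n" "D' \<in> carrier_mat n n"
    "N \<in> carrier_mat n n" "J \<in> carrier_mat n n"
    by (auto simp: U_def W_def D_def D'_def N_def J_def)
  have dU: "det U = 1"
  proof -
    have "det U = prod_list (diag_mat U)"
      by (rule det_lower_triangular[OF _ c(1)], auto simp: U_def)
    also have "\<dots> = 1" by (auto simp: diag_mat_def U_def prod_list_zero_iff intro!: prod_list_neutral)
    finally show ?thesis .
  qed
  have dW: "det W = 1"
  proof -
    have "det W = prod_list (diag_mat W)"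
      by (rule det_upper_triangular[OF _ c(2)], auto simp: W_def upper_triangular_def)
    also have "\<dots> = 1" by (auto simp: diag_mat_def W_def intro!: prod_list_neutral)
    finally show ?thesis .
  qed
  have dD: "det D = c" unfolding D_def by (rule det_diag1[OF n0])
  have dD': "det D' = c + real n" unfolding D'_def by (rule det_diag1[OF n0])
  have sumA: "\<And>i. i < n \<Longrightarrow> (\<Sum>k = 0..<n. A $$ (i,k)) = c" using rs by (simp add: lessThan_atLeast0)
  have e1: "A * U = N * D"
  proof (rule eq_matI)
    fix i j assume ij: "i < dim_row (N * D)" "j < dim_col (N * D)"
    hence i: "i < n" and j: "j < n" using c by auto
    have "(A * U) $$ (i,j) = (\<Sum>k = 0..<n. A $$ (i,k) * U $$ (k,j))"
      using A c i j by (simp add: scalar_prod_def)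
    also have "\<dots> = (if j = 0 then c else A $$ (i,j))"
    proof (cases "j = 0")
      case True
      have "(\<Sum>k = 0..<n. A $$ (i,k) * U $$ (k,j)) = (\<Sum>k = 0..<n. A $$ (i,k))"
        by (rule sum.cong, auto simp: U_def True)
      then show ?thesis using sumA[OF i] True by simp
    next
      case False
      have "(\<Sum>k = 0..<n. A $$ (i,k) * U $$ (k,j)) = (\<Sum>k = 0..<n. if k = j then A $$ (i,k) else 0)"
        by (rule sum.cong, auto simp: U_def False j)
      then show ?thesis using False j by simp
    qed
    also have "\<dots> = (N * D) $$ (i,j)"
    proof -
      have "(N * D) $$ (i,j) = (\<Sum>k = 0..<n. N $$ (i,k) * D $$ (k,j))"
        using c i j by (simp add: scalar_prod_def)
      also have "\<dots> = (\<Sum>k = 0..<n. if k = j then N $$ (i,k) * D $$ (k,j) else 0)"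
        by (rule sum.cong, auto simp: D_def j)
      also have "\<dots> = N $$ (i,j) * D $$ (j,j)" using j by simp
      finally show ?thesis using i j by (simp add: N_def D_def)
    qed
    finally show "(A * U) $$ (i,j) = (N * D) $$ (i,j)" .
  qed (insert A c, auto)
  define M where "M = N * W"
  have Mc: "M \<in> carrier_mat n n" using c by (auto simp: M_def)
  have e2: "(A + J) * U = M * D'"
  proof (rule eq_matI)
    fix i j assume ij: "i < dim_row (M * D')" "j < dim_col (M * D')"
    hence i: "i < n" and j: "j < n" using c Mc by auto
    have NW: "M $$ (i,k) = (if k = 0 then 1 else A $$ (i,k) + 1)" if k: "k < n" for k
    proof -
      have "M $$ (i,k) = (\<Sum>l = 0..<n. N $$ (i,l) * W $$ (l,k))"
        using c i k by (simp add: scalar_prod_def M_def)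
      also have "\<dots> = (\<Sum>l = 0..<n. (if l = k then N $$ (i,l) else 0) + (if l = 0 \<and> k \<noteq> 0 then N $$ (i,l) else 0))"
        by (rule sum.cong, auto simp: W_def k)
      also have "\<dots> = N $$ (i,k) + (if k \<noteq> 0 then N $$ (i,0) else 0)"
        using k n0 by (simp add: sum.distrib)
      finally show ?thesis using i k n0 by (simp add: N_def)
    qed
    have "((A + J) * U) $$ (i,j) = (\<Sum>k = 0..<n. (A + J) $$ (i,k) * U $$ (k,j))"
      using A c i j by (simp add: scalar_prod_def)
    also have "\<dots> = (if j = 0 then c + real n else A $$ (i,j) + 1)"
    proof (cases "j = 0")
      case True
      have "(\<Sum>k = 0..<n. (A + J) $$ (i,k) * U $$ (k,j)) = (\<Sum>k = 0..<n. A $$ (i,k) + 1)"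
        by (rule sum.cong, insert A c i True, auto simp: U_def J_def)
      also have "\<dots> = c + real n" using sumA[OF i] by (simp add: sum.distrib)
      finally show ?thesis using True by simp
    next
      case False
      have "(\<Sum>k = 0..<n. (A + J) $$ (i,k) * U $$ (k,j)) = (\<Sum>k = 0..<n. if k = j then A $$ (i,k) + 1 else 0)"
        by (rule sum.cong, insert A c i j, auto simp: U_def J_def False)
      then show ?thesis using False j by simp
    qed
    also have "\<dots> = (M * D') $$ (i,j)"
    proof -
      have "(M * D') $$ (i,j) = (\<Sum>k = 0..<n. M $$ (i,k) * D' $$ (k,j))"
        using c Mc i j by (simp add: scalar_prod_def)
      also have "\<dots> = (\<Sum>k = 0..<n. if k = j then M $$ (i,k) * D' $$ (k,j) else 0)"
        by (rule sum.cong, auto simp: D'_def j)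
      also have "\<dots> = M $$ (i,j) * D' $$ (j,j)" using j by simp
      finally show ?thesis using i j by (simp add: NW D'_def)
    qed
    finally show "((A + J) * U) $$ (i,j) = (M * D') $$ (i,j)" .
  qed (insert A c Mc, auto)
  have "det A = det N * c"
    using arg_cong[OF e1, of det] det_mult[OF A c(1)] det_mult[OF c(5) c(3)] dU dD by simp
  moreover have "det (A + J) = det N * (c + real n)"
  proof -
    have AJ: "A + J \<in> carrier_mat n n" using A c by auto
    show ?thesis
      using arg_cong[OF e2, of det] det_mult[OF AJ c(1)] det_mult[OF Mc c(4)] det_mult[OF c(5) c(2)] dU dW dD'
      unfolding M_def by simp
  qed
  ultimately show ?thesis unfolding J_def by (simp add: algebra_simps)
qed


definition hx :: "'a set \<Rightarrow> ('a \<Rightarrow> 'a \<Rightarrow> bool) \<Rightarrow> real \<Rightarrow> 'a \<Rightarrow> 'a \<Rightarrow> real" where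
  "hx V E x u v = (if u = v then x - real (degree V E u) else if E u v then 1 else 0)"

lemma vertex_enum_bij: assumes "finite V" shows "bij_betw (vertex_enum V) {0..<card V} V"
  unfolding vertex_enum_def by (rule someI_ex[OF ex_bij_betw_nat_finite[OF assms]])

lemma cp_detf:
  assumes V: "finite V" and g: "bij_betw g {0..<card V} V"
  shows "poly (char_poly (laplacian V E)) x = detf (card V) g (hx V E x)"
proof -
  let ?n = "card V"
  let ?f = "vertex_enum V"
  have f: "bij_betw ?f {0..<?n} V" by (rule vertex_enum_bij[OF V])
  have inj: "\<And>i j. i < ?n \<Longrightarrow> j < ?n \<Longrightarrow> ?f i = ?f j \<longleftrightarrow> i = j"
    using f unfolding bij_betw_def inj_on_def by auto
  have L: "laplacian V E \<in> carrier_mat ?n ?n" unfolding laplacian_def Let_def by auto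
  have "poly (char_poly (laplacian V E)) x = detf ?n ?f (hx V E x)"
    unfolding char_poly_def detf_def
    by (rule poly_det_cong[of _ ?n], insert L inj,
        auto simp: char_poly_matrix_def laplacian_def Let_def hx_def)
  also have "\<dots> = detf ?n g (hx V E x)" by (rule detf_bij[OF f g])
  finally show ?thesis .
qed

lemma detf_neg: "detf n g (\<lambda>u v. - h u v) = (-1)^n * detf n g h"
proof -
  have "mat n n (\<lambda>(i,j). - h (g i) (g j)) = (-1) \<cdot>\<^sub>m mat n n (\<lambda>(i,j). h (g i) (g j))"
    by (rule eq_matI, auto)
  thus ?thesis unfolding detf_def by simp
qed

lemma simple_graphD:
  assumes "simple_graph V E" "E u v" shows "u \<in> V" "v \<in> V" "u \<noteq> v" "E v u"
  using assms unfolding simple_graph_def by auto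

lemma degree_compl:
  assumes G: "simple_graph V E" and u: "u \<in> V"
  shows "degree V (graph_compl V E) u = card V - 1 - degree V E u"
proof -
  have fin: "finite V" using G by (simp add: simple_graph_def)
  have "{v \<in> V. graph_compl V E u v} = (V - {u}) - {v \<in> V. E u v}"
    using u by (auto simp: graph_compl_def)
  moreover have "{v \<in> V. E u v} \<subseteq> V - {u}" using simple_graphD[OF G] by blast
  ultimately have "degree V (graph_compl V E) u = card (V - {u}) - degree V E u"
    unfolding degree_def using fin by (simp add: card_Diff_subset finite_subset)
  thus ?thesis using u fin by simp
qed

lemma sum_enum_E:
  assumes G: "simple_graph V E" and g: "bij_betw g {0..<card V} V" and u: "u \<in> V"
  shows "(\<Sum>j<card V. if E u (g j) then 1 else 0) = real (degree V E u)"
proof -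
  have "(\<Sum>j<card V. if E u (g j) then 1 else (0::real)) = (\<Sum>v\<in>V. if E u v then 1 else 0)"
    using sum.reindex_bij_betw[OF g, of "\<lambda>v. if E u v then 1 else (0::real)"]
    by (simp add: lessThan_atLeast0)
  also have "\<dots> = real (card {v \<in> V. E u v})"
    using G by (simp add: sum.If_cases simple_graph_def Int_def)
  finally show ?thesis unfolding degree_def .
qed

lemma cp_compl:
  assumes G: "simple_graph V E"
  shows "(x - real (card V)) * poly (char_poly (laplacian V (graph_compl V E))) x
       = x * (-1)^(card V) * poly (char_poly (laplacian V E)) (real (card V) - x)"
proof -
  let ?n = "card V"
  have V: "finite V" using G by (simp add: simple_graph_def)
  obtain g where g: "bij_betw g {0..<?n} V" using ex_bij_betw_nat_finite[OF V] by blast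
  have gV: "\<And>i. i < ?n \<Longrightarrow> g i \<in> V" using g by (auto simp: bij_betw_def)
  have ginj: "\<And>i j. i < ?n \<Longrightarrow> j < ?n \<Longrightarrow> g i = g j \<longleftrightarrow> i = j"
    using g unfolding bij_betw_def inj_on_def by auto
  have irr: "\<And>u. \<not> E u u" using simple_graphD(3)[OF G] by blast
  define A where "A = mat ?n ?n (\<lambda>(i,j). - hx V E (real ?n - x) (g i) (g j))"
  have Ac: "A \<in> carrier_mat ?n ?n" by (simp add: A_def)
  have rs: "(\<Sum>j<?n. A $$ (i,j)) = x - real ?n" if i: "i < ?n" for i
  proof -
    have "(\<Sum>j<?n. A $$ (i,j)) = (\<Sum>j<?n. (if j = i then x - real ?n + real (degree V E (g i)) else 0)
              - (if E (g i) (g j) then 1 else 0))"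
      by (rule sum.cong, insert i ginj irr, auto simp: A_def hx_def)
    also have "\<dots> = x - real ?n + real (degree V E (g i)) - real (degree V E (g i))"
      using i sum_enum_E[OF G g gV[OF i]] by (simp add: sum_subtractf)
    finally show ?thesis by simp
  qed
  have AJ: "A + mat ?n ?n (\<lambda>_. 1) = mat ?n ?n (\<lambda>(i,j). hx V (graph_compl V E) x (g i) (g j))"
  proof (rule eq_matI)
    fix i j assume "i < dim_row (mat ?n ?n (\<lambda>(i,j). hx V (graph_compl V E) x (g i) (g j)))"
      "j < dim_col (mat ?n ?n (\<lambda>(i,j). hx V (graph_compl V E) x (g i) (g j)))"
    hence i: "i < ?n" and j: "j < ?n" by auto
    have dc: "degree V (graph_compl V E) (g i) = ?n - 1 - degree V E (g i)"
      by (rule degree_compl[OF G gV[OF i]])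
    have dle: "degree V E (g i) \<le> ?n - 1"
    proof -
      have "{v \<in> V. E (g i) v} \<subseteq> V - {g i}" using simple_graphD[OF G] by blast
      hence "degree V E (g i) \<le> card (V - {g i})" unfolding degree_def
        by (intro card_mono) (use V in auto)
      thus ?thesis using gV[OF i] V by simp
    qed
    have n1: "1 \<le> ?n" using i by simp
    show "(A + mat ?n ?n (\<lambda>_. 1)) $$ (i,j) = mat ?n ?n (\<lambda>(i,j). hx V (graph_compl V E) x (g i) (g j)) $$ (i,j)"
      using i j ginj[OF i j] gV[OF i] gV[OF j] dc dle n1
      by (auto simp: A_def hx_def graph_compl_def of_nat_diff)
  qed (auto simp: A_def)
  have "(x - real ?n) * det (A + mat ?n ?n (\<lambda>_. 1)) = (x - real ?n + real ?n) * det A"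
    by (rule det_plus_J[OF Ac rs])
  hence "(x - real ?n) * detf ?n g (hx V (graph_compl V E) x) = x * det A"
    unfolding AJ detf_def by simp
  moreover have "det A = (-1)^?n * detf ?n g (hx V E (real ?n - x))"
    using detf_neg[of ?n g "hx V E (real ?n - x)"] unfolding A_def detf_def by simp
  ultimately show ?thesis using cp_detf[OF V g] by simp
qed


lemma degree_union1:
  assumes G1: "simple_graph V1 E1" and G2: "simple_graph V2 E2" and dis: "V1 \<inter> V2 = {}"
    and u: "u \<in> V1"
  shows "degree (V1 \<union> V2) (graph_union E1 E2) u = degree V1 E1 u"
proof -
  have "{v \<in> V1 \<union> V2. graph_union E1 E2 u v} = {v \<in> V1. E1 u v}"
    using u dis simple_graphD[OF G1] simple_graphD[OF G2] by (auto simp: graph_union_def)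
  thus ?thesis unfolding degree_def by simp
qed

lemma cp_union:
  assumes G1: "simple_graph V1 E1" and G2: "simple_graph V2 E2" and dis: "V1 \<inter> V2 = {}"
  shows "poly (char_poly (laplacian (V1 \<union> V2) (graph_union E1 E2))) x
       = poly (char_poly (laplacian V1 E1)) x * poly (char_poly (laplacian V2 E2)) x"
proof -
  let ?n1 = "card V1" and ?n2 = "card V2"
  have F1: "finite V1" using G1 by (simp add: simple_graph_def)
  have F2: "finite V2" using G2 by (simp add: simple_graph_def)
  have cU: "card (V1 \<union> V2) = ?n1 + ?n2" using F1 F2 dis by (simp add: card_Un_disjoint)
  obtain f1 where f1: "bij_betw f1 {0..<?n1} V1" using ex_bij_betw_nat_finite[OF F1] by blast
  obtain f2 where f2: "bij_betw f2 {0..<?n2} V2" using ex_bij_betw_nat_finite[OF F2] by blast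
  define g where "g = (\<lambda>i. if i < ?n1 then f1 i else f2 (i - ?n1))"
  have f1V: "\<And>i. i < ?n1 \<Longrightarrow> f1 i \<in> V1" using f1 by (auto simp: bij_betw_def)
  have f2V: "\<And>i. i < ?n2 \<Longrightarrow> f2 i \<in> V2" using f2 by (auto simp: bij_betw_def)
  have f1i: "\<And>i j. i < ?n1 \<Longrightarrow> j < ?n1 \<Longrightarrow> f1 i = f1 j \<longleftrightarrow> i = j"
    using f1 unfolding bij_betw_def inj_on_def by auto
  have f2i: "\<And>i j. i < ?n2 \<Longrightarrow> j < ?n2 \<Longrightarrow> f2 i = f2 j \<longleftrightarrow> i = j"
    using f2 unfolding bij_betw_def inj_on_def by auto
  have g: "bij_betw g {0..<card (V1 \<union> V2)} (V1 \<union> V2)"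
  proof -
    have "inj_on g {0..<?n1 + ?n2}"
    proof (rule inj_onI)
      fix i j assume i: "i \<in> {0..<?n1 + ?n2}" and j: "j \<in> {0..<?n1 + ?n2}" and e: "g i = g j"
      show "i = j"
      proof (cases "i < ?n1"; cases "j < ?n1")
        assume "i < ?n1" "j < ?n1" thus ?thesis using e f1i by (auto simp: g_def)
      next
        assume a: "i < ?n1" "\<not> j < ?n1"
        hence "g i \<in> V1" "g j \<in> V2" using f1V f2V j by (auto simp: g_def)
        thus ?thesis using e dis by auto
      next
        assume a: "\<not> i < ?n1" "j < ?n1"
        hence "g i \<in> V2" "g j \<in> V1" using f1V f2V i by (auto simp: g_def)
        thus ?thesis using e dis by auto
      next
        assume a: "\<not> i < ?n1" "\<not> j < ?n1"
        have "i - ?n1 = j - ?n1" using a e f2i[of "i - ?n1" "j - ?n1"] i j by (auto simp: g_def)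
        thus ?thesis using a by simp
      qed
    qed
    moreover have "g ` {0..<?n1 + ?n2} = V1 \<union> V2"
    proof
      show "g ` {0..<?n1 + ?n2} \<subseteq> V1 \<union> V2" using f1V f2V by (auto simp: g_def)
      show "V1 \<union> V2 \<subseteq> g ` {0..<?n1 + ?n2}"
      proof
        fix v assume "v \<in> V1 \<union> V2"
        thus "v \<in> g ` {0..<?n1 + ?n2}"
        proof
          assume "v \<in> V1"
          then obtain i where "i < ?n1" "v = f1 i" using f1 \<open>v \<in> V1\<close> unfolding bij_betw_def by (metis atLeastLessThan_iff imageE)
          thus ?thesis by (auto simp: g_def intro!: image_eqI[of _ _ i])
        next
          assume "v \<in> V2"
          then obtain i where i: "i < ?n2" "v = f2 i" using f2 \<open>v \<in> V2\<close> unfolding bij_betw_def by (metis atLeastLessThan_iff imageE)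
          hence "g (i + ?n1) = v" by (simp add: g_def)
          thus ?thesis using i by (auto intro!: image_eqI[of _ _ "i + ?n1"])
        qed
      qed
    qed
    ultimately show ?thesis unfolding bij_betw_def cU by simp
  qed
  define M1 where "M1 = mat ?n1 ?n1 (\<lambda>(i,j). hx V1 E1 x (f1 i) (f1 j))"
  define M2 where "M2 = mat ?n2 ?n2 (\<lambda>(i,j). hx V2 E2 x (f2 i) (f2 j))"
  have M: "mat (card (V1 \<union> V2)) (card (V1 \<union> V2)) (\<lambda>(i,j). hx (V1 \<union> V2) (graph_union E1 E2) x (g i) (g j))
     = four_block_mat M1 (0\<^sub>m ?n1 ?n2) (0\<^sub>m ?n2 ?n1) M2"
  proof (rule eq_matI)
    fix i j assume "i < dim_row (four_block_mat M1 (0\<^sub>m ?n1 ?n2) (0\<^sub>m ?n2 ?n1) M2)"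
      "j < dim_col (four_block_mat M1 (0\<^sub>m ?n1 ?n2) (0\<^sub>m ?n2 ?n1) M2)"
    hence i: "i < ?n1 + ?n2" and j: "j < ?n1 + ?n2" by (auto simp: M1_def M2_def)
    show "mat (card (V1 \<union> V2)) (card (V1 \<union> V2)) (\<lambda>(i,j). hx (V1 \<union> V2) (graph_union E1 E2) x (g i) (g j)) $$ (i,j)
      = four_block_mat M1 (0\<^sub>m ?n1 ?n2) (0\<^sub>m ?n2 ?n1) M2 $$ (i,j)"
    proof (cases "i < ?n1"; cases "j < ?n1")
      assume a: "i < ?n1" "j < ?n1"
      have "\<not> E2 (f1 i) (f1 j)" using simple_graphD(1)[OF G2] f1V[OF a(1)] dis by auto
      thus ?thesis using a i j cU degree_union1[OF G1 G2 dis f1V[OF a(1)]] f1V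
        by (auto simp: M1_def M2_def g_def hx_def graph_union_def)
    next
      assume a: "i < ?n1" "\<not> j < ?n1"
      have "f1 i \<in> V1" "f2 (j - ?n1) \<in> V2" using a f1V f2V j by auto
      hence "f1 i \<noteq> f2 (j - ?n1)" "\<not> E1 (f1 i) (f2 (j - ?n1))" "\<not> E2 (f1 i) (f2 (j - ?n1))"
        using dis simple_graphD(2)[OF G1] simple_graphD(1)[OF G2] by auto
      thus ?thesis using a i j cU by (auto simp: M1_def M2_def g_def hx_def graph_union_def)
    next
      assume a: "\<not> i < ?n1" "j < ?n1"
      have "f2 (i - ?n1) \<in> V2" "f1 j \<in> V1" using a f1V f2V i by auto
      hence "f2 (i - ?n1) \<noteq> f1 j" "\<not> E1 (f2 (i - ?n1)) (f1 j)" "\<not> E2 (f2 (i - ?n1)) (f1 j)"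
        using dis simple_graphD(1)[OF G1] simple_graphD(2)[OF G2] by auto
      thus ?thesis using a i j cU by (auto simp: M1_def M2_def g_def hx_def graph_union_def)
    next
      assume a: "\<not> i < ?n1" "\<not> j < ?n1"
      have d: "degree (V2 \<union> V1) (graph_union E2 E1) (f2 (i - ?n1)) = degree V2 E2 (f2 (i - ?n1))"
        using degree_union1[OF G2 G1, of "f2 (i - ?n1)"] dis f2V[of "i - ?n1"] a i by (auto simp: Int_commute)
      have "degree (V1 \<union> V2) (graph_union E1 E2) (f2 (i - ?n1)) = degree V2 E2 (f2 (i - ?n1))"
        using d by (simp add: Un_commute graph_union_def disj_commute)
      moreover have "f2 (j - ?n1) \<in> V2" "f2 (i - ?n1) \<in> V2" using a i j f2V by auto
      moreover have "\<not> E1 (f2 (i - ?n1)) (f2 (j - ?n1))"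
      proof
        assume "E1 (f2 (i - ?n1)) (f2 (j - ?n1))"
        hence "f2 (i - ?n1) \<in> V1" using simple_graphD(1)[OF G1] by blast
        moreover have "f2 (i - ?n1) \<in> V2" using f2V a i by auto
        ultimately show False using dis by auto
      qed
      ultimately show ?thesis using a i j cU
        by (auto simp: M1_def M2_def g_def hx_def graph_union_def)
    qed
  qed (auto simp: cU M1_def M2_def)
  have "poly (char_poly (laplacian (V1 \<union> V2) (graph_union E1 E2))) x
      = det (four_block_mat M1 (0\<^sub>m ?n1 ?n2) (0\<^sub>m ?n2 ?n1) M2)"
    unfolding cp_detf[OF finite_UnI[OF F1 F2] g] detf_def M ..
  also have "\<dots> = det M1 * det M2"
    by (rule det_four_block_mat_lower_left_zero, auto simp: M1_def M2_def)
  also have "\<dots> = poly (char_poly (laplacian V1 E1)) x * poly (char_poly (laplacian V2 E2)) x"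
    unfolding cp_detf[OF F1 f1] cp_detf[OF F2 f2] detf_def M1_def M2_def ..
  finally show ?thesis .
qed


definition es :: "'a set \<Rightarrow> ('a \<Rightarrow> 'a \<Rightarrow> bool) \<Rightarrow> 'a set set" where
  "es V E = {{u, v} | u v. u \<in> V \<and> v \<in> V \<and> E u v}"

definition P2 :: "'a set \<Rightarrow> 'a set set" where
  "P2 V = {{u, v} | u v. u \<in> V \<and> v \<in> V \<and> u \<noteq> v}"

lemma num_edges_es: "num_edges V E = card (es V E)"
  unfolding num_edges_def es_def ..

lemma P2_eq: "P2 V = {B. B \<subseteq> V \<and> card B = 2}"
  unfolding P2_def by (auto simp: card_2_iff)

lemma card_P2: "finite V \<Longrightarrow> card (P2 V) = card V choose 2"
  unfolding P2_eq by (rule n_subsets)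

lemma finite_P2: "finite V \<Longrightarrow> finite (P2 V)"
  unfolding P2_eq by (rule finite_subset[of _ "Pow V"]) auto

lemma es_sub_P2: "simple_graph V E \<Longrightarrow> es V E \<subseteq> P2 V"
  unfolding es_def P2_def simple_graph_def by blast

lemma finite_es: "simple_graph V E \<Longrightarrow> finite (es V E)"
  using es_sub_P2 finite_P2 by (metis finite_subset simple_graph_def)

lemma es_union:
  assumes G1: "simple_graph V1 E1" and G2: "simple_graph V2 E2"
  shows "es (V1 \<union> V2) (graph_union E1 E2) = es V1 E1 \<union> es V2 E2"
  unfolding es_def graph_union_def using simple_graphD[OF G1] simple_graphD[OF G2] by blast

lemma es_disj:
  assumes G1: "simple_graph V1 E1" and G2: "simple_graph V2 E2" and dis: "V1 \<inter> V2 = {}"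
  shows "es V1 E1 \<inter> es V2 E2 = {}"
proof -
  have "\<And>A. A \<in> es V1 E1 \<Longrightarrow> A \<subseteq> V1 \<and> A \<noteq> {}" unfolding es_def using simple_graphD[OF G1] by blast
  moreover have "\<And>A. A \<in> es V2 E2 \<Longrightarrow> A \<subseteq> V2 \<and> A \<noteq> {}" unfolding es_def using simple_graphD[OF G2] by blast
  ultimately show ?thesis using dis by blast
qed

lemma num_edges_union:
  assumes G1: "simple_graph V1 E1" and G2: "simple_graph V2 E2" and dis: "V1 \<inter> V2 = {}"
  shows "num_edges (V1 \<union> V2) (graph_union E1 E2) = num_edges V1 E1 + num_edges V2 E2"
  unfolding num_edges_es es_union[OF G1 G2]
  by (rule card_Un_disjoint[OF finite_es[OF G1] finite_es[OF G2] es_disj[OF G1 G2 dis]])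

lemma es_compl:
  assumes G: "simple_graph V E"
  shows "es V (graph_compl V E) = P2 V - es V E"
proof
  show "es V (graph_compl V E) \<subseteq> P2 V - es V E"
  proof
    fix A assume "A \<in> es V (graph_compl V E)"
    then obtain u v where A: "A = {u,v}" "u \<in> V" "v \<in> V" "u \<noteq> v" "\<not> E u v"
      unfolding es_def graph_compl_def by blast
    have "A \<notin> es V E"
    proof
      assume "A \<in> es V E"
      then obtain a b where "A = {a,b}" "E a b" unfolding es_def by blast
      with A show False using simple_graphD(4)[OF G] by (auto simp: doubleton_eq_iff)
    qed
    thus "A \<in> P2 V - es V E" using A unfolding P2_def by blast
  qed
next
  show "P2 V - es V E \<subseteq> es V (graph_compl V E)"
    unfolding P2_def es_def graph_compl_def by blast
qed

lemma num_edges_le: "simple_graph V E \<Longrightarrow> num_edges V E \<le> card V choose 2"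
  unfolding num_edges_es
  by (metis card_P2 card_mono es_sub_P2 finite_P2 simple_graph_def)

lemma num_edges_compl:
  assumes G: "simple_graph V E"
  shows "num_edges V (graph_compl V E) = (card V choose 2) - num_edges V E"
proof -
  have F: "finite V" using G by (simp add: simple_graph_def)
  show ?thesis
    unfolding num_edges_es es_compl[OF G]
    by (subst card_Diff_subset[OF finite_es[OF G] es_sub_P2[OF G]]) (simp add: card_P2[OF F])
qed

lemma two_choose2: "2 * real (n choose 2) = real n * (real n - 1)"
proof -
  have "even (n * (n - 1))" by auto
  hence "2 * (n * (n - 1) div 2) = n * (n - 1)" by simp
  hence "2 * real (n choose 2) = real (n * (n - 1))" unfolding choose_two
    by (metis of_nat_mult of_nat_numeral)
  thus ?thesis by (cases n) (auto simp: algebra_simps)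
qed

lemma simple_graph_union:
  "simple_graph V1 E1 \<Longrightarrow> simple_graph V2 E2 \<Longrightarrow> simple_graph (V1 \<union> V2) (graph_union E1 E2)"
  unfolding simple_graph_def graph_union_def by blast

lemma simple_graph_compl:
  "simple_graph V E \<Longrightarrow> simple_graph V (graph_compl V E)"
  unfolding simple_graph_def graph_compl_def by blast

lemma simple_graph_single: "simple_graph {v} (\<lambda>_ _. False)"
  unfolding simple_graph_def by simp


definition good :: "'a set \<Rightarrow> ('a \<Rightarrow> 'a \<Rightarrow> bool) \<Rightarrow> real multiset \<Rightarrow> bool" where
  "good V E S \<longleftrightarrow> simple_graph V E \<and> char_poly (laplacian V E) = (\<Prod>s\<in>#S. [:- s, 1:])
     \<and> size S = card V \<and> 0 \<in># S \<and> sum_mset S = 2 * real (num_edges V E)"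

lemma poly_prod_lin: fixes S :: "real multiset" shows "poly (\<Prod>s\<in>#S. [:- s, 1:]) x = (\<Prod>s\<in>#S. x - s)"
  by (induct S) (simp_all add: left_diff_distrib)

lemma poly_eq_except:
  fixes p q :: "real poly"
  assumes "\<And>x. x \<noteq> a \<Longrightarrow> poly p x = poly q x"
  shows "p = q"
proof (rule ccontr)
  assume "p \<noteq> q"
  hence "p - q \<noteq> 0" by simp
  hence "finite {x. poly (p - q) x = 0}" by (rule poly_roots_finite)
  moreover have "UNIV - {a} \<subseteq> {x. poly (p - q) x = 0}" using assms by auto
  ultimately have "finite (UNIV - {a} :: real set)" by (rule finite_subset[rotated])
  hence "finite (UNIV :: real set)" by simp
  thus False by (simp add: infinite_UNIV_char_0)
qed

lemma prod_mset_neg: "(\<Prod>s\<in>#R. - f s) = (-1) ^ size R * (\<Prod>s\<in>#R. (f s :: real))"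
  by (induct R) auto

lemma good_single: "good {v} (\<lambda>_ _. False) {#0#}"
proof -
  have L: "laplacian {v} (\<lambda>_ _. False) \<in> carrier_mat 1 1" unfolding laplacian_def Let_def by auto
  have "\<And>x. poly (char_poly (laplacian {v} (\<lambda>_ _. False))) x = x"
  proof -
    fix x
    have g: "bij_betw (\<lambda>_. v) {0..<card {v}} {v}" by (auto simp: bij_betw_def inj_on_def)
    have "poly (char_poly (laplacian {v} (\<lambda>_ _. False))) x = detf 1 (\<lambda>_. v) (hx {v} (\<lambda>_ _. False) x)"
      using cp_detf[OF _ g] by simp
    also have "\<dots> = x" unfolding detf_def
      by (subst det_upper_triangular[of _ 1], auto simp: upper_triangular_def diag_mat_def hx_def degree_def)
    finally show "poly (char_poly (laplacian {v} (\<lambda>_ _. False))) x = x" .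
  qed
  hence "char_poly (laplacian {v} (\<lambda>_ _. False)) = (\<Prod>s\<in>#{#0#}. [:- s, 1:])"
    by (intro poly_eq_except[where a=0]) (auto simp: poly_prod_lin)
  moreover have "num_edges {v} (\<lambda>_ _. False) = 0" unfolding num_edges_def by simp
  ultimately show ?thesis unfolding good_def using simple_graph_single by simp
qed

lemma good_union:
  assumes g1: "good V1 E1 S1" and g2: "good V2 E2 S2" and dis: "V1 \<inter> V2 = {}"
  shows "good (V1 \<union> V2) (graph_union E1 E2) (S1 + S2)"
proof -
  have G1: "simple_graph V1 E1" and G2: "simple_graph V2 E2" using g1 g2 by (auto simp: good_def)
  have F1: "finite V1" "finite V2" using G1 G2 by (auto simp: simple_graph_def)
  have "char_poly (laplacian (V1 \<union> V2) (graph_union E1 E2)) = (\<Prod>s\<in>#S1 + S2. [:- s, 1:])"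
    by (rule poly_eq_except[where a=0], subst cp_union[OF G1 G2 dis], insert g1 g2, simp add: good_def poly_prod_lin)
  thus ?thesis using g1 g2 simple_graph_union[OF G1 G2] num_edges_union[OF G1 G2 dis] F1 dis
    by (auto simp: good_def card_Un_disjoint algebra_simps)
qed

definition spec_compl :: "nat \<Rightarrow> real multiset \<Rightarrow> real multiset" where
  "spec_compl n S = add_mset 0 (image_mset (\<lambda>s. real n - s) (S - {#0#}))"

lemma good_compl:
  assumes g: "good V E S"
  shows "good V (graph_compl V E) (spec_compl (card V) S)"
proof -
  let ?n = "card V"
  define R where "R = S - {#0#}"
  have G: "simple_graph V E" using g by (simp add: good_def)
  have S: "S = add_mset 0 R" using g unfolding R_def good_def by simp
  have sR: "size R = ?n - 1" and n1: "?n \<ge> 1" using g unfolding S good_def by auto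
  have cpS: "\<And>y. poly (char_poly (laplacian V E)) y = (\<Prod>s\<in>#S. y - s)"
    using g by (simp add: good_def poly_prod_lin)
  have "char_poly (laplacian V (graph_compl V E)) = (\<Prod>s\<in>#spec_compl ?n S. [:- s, 1:])"
  proof (rule poly_eq_except[where a="real ?n"])
    fix x assume x: "x \<noteq> real ?n"
    have "(x - real ?n) * poly (char_poly (laplacian V (graph_compl V E))) x
      = x * (-1)^?n * (\<Prod>s\<in>#S. real ?n - x - s)" using cp_compl[OF G, of x] cpS by simp
    also have "\<dots> = x * (-1)^?n * ((real ?n - x) * (\<Prod>s\<in>#R. - (x - (real ?n - s))))"
      unfolding S by (simp add: algebra_simps)
    also have "\<dots> = x * (-1)^?n * ((real ?n - x) * ((-1)^(?n - 1) * (\<Prod>s\<in>#R. x - (real ?n - s))))"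
      by (subst prod_mset_neg, simp add: sR)
    also have "\<dots> = (x - real ?n) * (x * (\<Prod>s\<in>#R. x - (real ?n - s))) * ((-1)^?n * (-1)^(?n - 1) * (-1))"
      by (simp add: algebra_simps)
    also have "(-1::real)^?n * (-1)^(?n - 1) * (-1) = 1"
    proof -
      have "(-1::real)^?n * (-1)^(?n - 1) * (-1) = (-1)^(?n + (?n - 1) + 1)" by (simp add: power_add)
      also have "?n + (?n - 1) + 1 = 2 * ?n" using n1 by simp
      finally show ?thesis by simp
    qed
    finally have "(x - real ?n) * poly (char_poly (laplacian V (graph_compl V E))) x
        = (x - real ?n) * (x * (\<Prod>s\<in>#R. x - (real ?n - s)))" by simp
    hence "poly (char_poly (laplacian V (graph_compl V E))) x = x * (\<Prod>s\<in>#R. x - (real ?n - s))"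
      using x by simp
    thus "poly (char_poly (laplacian V (graph_compl V E))) x = poly (\<Prod>s\<in>#spec_compl ?n S. [:- s, 1:]) x"
      unfolding poly_prod_lin spec_compl_def R_def[symmetric] by (simp add: multiset.map_comp o_def)
  qed
  moreover have "size (spec_compl ?n S) = ?n" unfolding spec_compl_def R_def[symmetric] using sR n1 by simp
  moreover have "sum_mset (spec_compl ?n S) = 2 * real (num_edges V (graph_compl V E))"
  proof -
    have le: "num_edges V E \<le> ?n choose 2" by (rule num_edges_le[OF G])
    have "sum_mset (spec_compl ?n S) = (\<Sum>s\<in>#R. real ?n - s)"
      unfolding spec_compl_def R_def[symmetric] by (simp add: multiset.map_comp o_def)
    also have "\<dots> = real (size R) * real ?n - sum_mset R"
      by (induct R) (auto simp: algebra_simps)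
    also have "sum_mset R = 2 * real (num_edges V E)" using g unfolding good_def S by simp
    also have "real (size R) * real ?n = 2 * real (?n choose 2)"
      unfolding two_choose2 sR using n1 by (simp add: of_nat_diff algebra_simps)
    finally show ?thesis unfolding num_edges_compl[OF G] using le by (simp add: of_nat_diff)
  qed
  ultimately show ?thesis using simple_graph_compl[OF G] unfolding good_def spec_compl_def by simp
qed

lemma cograph_good: "cograph V E \<Longrightarrow> \<exists>S. good V E S"
proof (induct rule: cograph.induct)
  case (single v) show ?case by (rule exI[of _ "{#0#}"], rule good_single)
next
  case (union V1 E1 V2 E2) thus ?case using good_union by blast
next
  case (compl V E) thus ?case using good_compl by blast
qed


definition Bd :: "real \<Rightarrow> real \<Rightarrow> real \<Rightarrow> real" where
  "Bd n m k = min (2 * m) (min (m + k * (k + 1) / 2) (k * n))"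

definition up :: "nat \<Rightarrow> real multiset \<Rightarrow> bool" where
  "up n S \<longleftrightarrow> (\<forall>U. U \<subseteq># S \<longrightarrow> sum_mset U \<le> Bd (real n) (sum_mset S / 2) (real (size U)))"

lemma mset_split:
  assumes "U \<subseteq># A + B"
  shows "\<exists>U1 U2. U = U1 + U2 \<and> U1 \<subseteq># A \<and> U2 \<subseteq># B"
proof (intro exI conjI)
  show "U = (U \<inter># A) + (U - (U \<inter># A))" by (metis subset_mset.add_diff_inverse subset_mset.inf_le1)
  show "U \<inter># A \<subseteq># A" by simp
  show "U - (U \<inter># A) \<subseteq># B"
    unfolding subseteq_mset_def
  proof
    fix x
    have "count U x \<le> count A x + count B x" using assms by (metis count_union subseteq_mset_def)
    thus "count (U - U \<inter># A) x \<le> count B x" by (simp add: min_def)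
  qed
qed

lemma mset_sub_image:
  "U \<subseteq># image_mset f R \<Longrightarrow> \<exists>W. W \<subseteq># R \<and> U = image_mset f W"
proof (induct R arbitrary: U)
  case empty thus ?case by auto
next
  case (add r R)
  show ?case
  proof (cases "f r \<in># U")
    case True
    have "U - {#f r#} \<subseteq># image_mset f R" using add.prems
      by (simp add: subset_eq_diff_conv)
    then obtain W where W: "W \<subseteq># R" "U - {#f r#} = image_mset f W" using add.hyps by blast
    have "U = add_mset (f r) (U - {#f r#})" using True by simp
    hence "U = image_mset f (add_mset r W)" using W(2) by simp
    moreover have "add_mset r W \<subseteq># add_mset r R" using W(1) by simp
    ultimately show ?thesis by blast
  next
    case False
    have "U \<subseteq># image_mset f R" unfolding subseteq_mset_def
    proof
      fix x
      have "count U x \<le> count (add_mset (f r) (image_mset f R)) x" using add.prems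
        by (simp add: subseteq_mset_def del: count_add_mset)
      moreover have "x = f r \<Longrightarrow> count U x = 0" using False by (simp add: not_in_iff)
      ultimately show "count U x \<le> count (image_mset f R) x" by (cases "x = f r") auto
    qed
    then obtain W where W: "W \<subseteq># R" "U = image_mset f W" using add.hyps by blast
    have "W \<subseteq># add_mset r R" using W(1) by (auto simp: subseteq_mset_def intro: le_SucI)
    thus ?thesis using W(2) by blast
  qed
qed

lemma Bd_super_aux:
  fixes AB A1 B1 ab m1 m2 :: real
  assumes "AB = A1 + B1 + 2 * ab" "0 \<le> ab"
  shows "m1 + A1 / 2 + (m2 + B1 / 2) \<le> m1 + m2 + AB / 2"
  using assms by linarith

lemma Bd_super:
  assumes "0 \<le> a" "0 \<le> b" "0 \<le> n1" "0 \<le> n2"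
  shows "Bd n1 m1 a + Bd n2 m2 b \<le> Bd (n1 + n2) (m1 + m2) (a + b)"
proof -
  have p: "a * b \<ge> 0" "a * n2 \<ge> 0" "b * n1 \<ge> 0" using assms by auto
  have e1: "(a + b) * (a + b + 1) = a * (a + 1) + b * (b + 1) + 2 * (a * b)" by (simp add: algebra_simps)
  have e2: "(a + b) * (n1 + n2) = a * n1 + b * n2 + (a * n2 + b * n1)" by (simp add: ring_distribs add_ac)
  have h1: "m1 + a * (a + 1) / 2 + (m2 + b * (b + 1) / 2) \<le> m1 + m2 + (a + b) * (a + b + 1) / 2"
    by (rule Bd_super_aux[OF e1 p(1)])
  have h2: "a * n1 + b * n2 \<le> (a + b) * (n1 + n2)" unfolding e2 using p(2,3) by simp
  have b1: "Bd n1 m1 a \<le> 2 * m1" "Bd n1 m1 a \<le> m1 + a * (a + 1) / 2" "Bd n1 m1 a \<le> a * n1"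
    by (simp_all add: Bd_def)
  have b2: "Bd n2 m2 b \<le> 2 * m2" "Bd n2 m2 b \<le> m2 + b * (b + 1) / 2" "Bd n2 m2 b \<le> b * n2"
    by (simp_all add: Bd_def)
  have c1: "Bd n1 m1 a + Bd n2 m2 b \<le> 2 * m1 + 2 * m2" using b1(1) b2(1) by linarith
  have c2: "Bd n1 m1 a + Bd n2 m2 b \<le> m1 + m2 + (a + b) * (a + b + 1) / 2"
    using h1 b1(2) b2(2) by linarith
  have c3: "Bd n1 m1 a + Bd n2 m2 b \<le> (a + b) * (n1 + n2)" using h2 b1(3) b2(3) by linarith
  show ?thesis using c1 c2 c3 unfolding Bd_def[of "n1 + n2"] by (simp add: distrib_left)
qed

lemma Bd_mono_aux:
  fixes J K X Y m :: real
  assumes "J \<le> K" "X \<le> Y"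
  shows "min (2 * m) (min (m + J / 2) X) \<le> min (2 * m) (min (m + K / 2) Y)"
proof -
  have "m + J / 2 \<le> m + K / 2" using assms by linarith
  thus ?thesis using assms by (meson min.mono order_refl)
qed

lemma Bd_mono: "0 \<le> j \<Longrightarrow> j \<le> k \<Longrightarrow> 0 \<le> n \<Longrightarrow> Bd n m j \<le> Bd n m k"
proof -
  assume a: "0 \<le> j" "j \<le> k" "0 \<le> n"
  have "j * (j + 1) \<le> k * (k + 1)" using a by (intro mult_mono) auto
  moreover have "j * n \<le> k * n" using a by (intro mult_right_mono) auto
  ultimately show ?thesis unfolding Bd_def by (rule Bd_mono_aux)
qed

lemma up_single: "up 1 {#0#}"
  unfolding up_def
proof (intro allI impI)
  fix U :: "real multiset" assume "U \<subseteq># {#0#}"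
  hence "U = {#} \<or> U = {#0#}" using nonempty_subseteq_mset_eq_single[of U 0] by blast
  thus "sum_mset U \<le> Bd (real 1) (sum_mset {#0#} / 2) (real (size U))"
  proof (elim disjE)
    assume "U = {#}" thus ?thesis by (simp add: Bd_def)
  next
    assume "U = {#0#}" thus ?thesis by (simp add: Bd_def)
  qed
qed

lemma up_union:
  assumes "up n1 S1" "up n2 S2"
  shows "up (n1 + n2) (S1 + S2)"
  unfolding up_def
proof (intro allI impI)
  fix U assume "U \<subseteq># S1 + S2"
  then obtain U1 U2 where U: "U = U1 + U2" "U1 \<subseteq># S1" "U2 \<subseteq># S2" using mset_split by blast
  have "sum_mset U = sum_mset U1 + sum_mset U2" using U by simp
  also have "\<dots> \<le> Bd (real n1) (sum_mset S1 / 2) (real (size U1)) + Bd (real n2) (sum_mset S2 / 2) (real (size U2))"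
    using assms U unfolding up_def by (meson add_mono)
  also have "\<dots> \<le> Bd (real n1 + real n2) (sum_mset S1 / 2 + sum_mset S2 / 2) (real (size U1) + real (size U2))"
    by (rule Bd_super) auto
  finally show "sum_mset U \<le> Bd (real (n1 + n2)) (sum_mset (S1 + S2) / 2) (real (size U))"
    using U by (simp add: add_divide_distrib)
qed

lemma up_compl:
  assumes up: "up n S" and sz: "size S = n" and z: "0 \<in># S"
  shows "up n (spec_compl n S)"
  unfolding up_def
proof (intro allI impI)
  fix U assume U: "U \<subseteq># spec_compl n S"
  define R where "R = S - {#0#}"
  have S: "S = add_mset 0 R" using z unfolding R_def by simp
  have sR: "size R = n - 1" and n1: "1 \<le> n" using sz unfolding S by auto
  have sumR: "sum_mset R = sum_mset S" unfolding S by simp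
  have sumC: "sum_mset (spec_compl n S) = real (n - 1) * real n - sum_mset S"
  proof -
    have "sum_mset (spec_compl n S) = (\<Sum>s\<in>#R. real n - s)"
      unfolding spec_compl_def R_def[symmetric] by (simp add: multiset.map_comp o_def)
    also have "\<dots> = real (size R) * real n - sum_mset R"
      by (induct R) (auto simp: algebra_simps)
    finally show ?thesis using sR sumR by simp
  qed
  have "U \<subseteq># {#0#} + image_mset (\<lambda>s. real n - s) R"
    using U unfolding spec_compl_def R_def[symmetric] by simp
  then obtain U0 U1 where U01: "U = U0 + U1" "U0 \<subseteq># {#0#}" "U1 \<subseteq># image_mset (\<lambda>s. real n - s) R"
    using mset_split by blast
  have sU0: "sum_mset U0 = 0"
  proof -
    have "U0 = {#} \<or> U0 = {#0#}" using U01(2) nonempty_subseteq_mset_eq_single[of U0 0] by blast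
    thus ?thesis by (elim disjE) simp_all
  qed
  obtain W where W: "W \<subseteq># R" "U1 = image_mset (\<lambda>s. real n - s) W" using mset_sub_image[OF U01(3)] by blast
  define j where "j = size W"
  have jle: "j \<le> n - 1" using size_mset_mono[OF W(1)] sR unfolding j_def by simp
  have sU1: "sum_mset U1 = real j * real n - sum_mset W"
    unfolding W(2) j_def by (induct W) (auto simp: algebra_simps)
  have RW: "R - W \<subseteq># S" unfolding S
    by (auto simp: subseteq_mset_def intro: le_SucI)
  have sRW: "size (R - W) = n - 1 - j" using W(1) sR unfolding j_def by (simp add: size_Diff_submset)
  have RWe: "R = W + (R - W)" using W(1) by (simp add: subset_mset.add_diff_inverse)
  have "sum_mset R = sum_mset W + sum_mset (R - W)" by (subst RWe, simp)
  hence sumRW: "sum_mset (R - W) = sum_mset S - sum_mset W" using sumR by simp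
  define m where "m = sum_mset S / 2"
  have IH: "sum_mset S - sum_mset W \<le> Bd (real n) m (real (n - 1 - j))"
    using up RW unfolding up_def m_def sRW[symmetric] sumRW[symmetric] by blast
  have key: "real j * real n - 2 * m + Bd (real n) m (real (n - 1 - j))
      \<le> Bd (real n) ((real n * (real n - 1) - 2 * m) / 2) (real j)"
  proof -
    have e: "real (n - 1 - j) = real n - 1 - real j" using jle n1 by (simp add: of_nat_diff)
    define N where "N = real n"
    define J where "J = real j"
    have a1: "(N - 1 - J) * N = N * (N - 1) - J * N" by (simp add: algebra_simps)
    have a2: "J * N + (N - 1 - J) * (N - 1 - J + 1) / 2 = N * (N - 1) / 2 + J * (J + 1) / 2"
      by (simp add: field_simps)
    define t where "t = N - 1 - J"
    define mb where "mb = (N * (N - 1) - 2 * m) / 2"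
    have mb2: "2 * mb = N * (N - 1) - 2 * m" unfolding mb_def by simp
    have b: "Bd N m t \<le> 2 * m" "Bd N m t \<le> m + t * (t + 1) / 2" "Bd N m t \<le> t * N"
      by (simp_all add: Bd_def)
    have a1': "t * N = N * (N - 1) - J * N" unfolding t_def by (rule a1)
    have a2': "J * N + t * (t + 1) / 2 = N * (N - 1) / 2 + J * (J + 1) / 2" unfolding t_def by (rule a2)
    have c1: "J * N - 2 * m + Bd N m t \<le> 2 * mb" using b(3) a1' mb2 by linarith
    have mb': "mb = N * (N - 1) / 2 - m" unfolding mb_def by (simp add: diff_divide_distrib)
    have c2: "J * N - 2 * m + Bd N m t \<le> mb + J * (J + 1) / 2" using b(2) a2' mb' by linarith
    have c3: "J * N - 2 * m + Bd N m t \<le> J * N" using b(1) by linarith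
    have "J * N - 2 * m + Bd N m t \<le> Bd N mb J" unfolding Bd_def[of N mb J] using c1 c2 c3 by simp
    thus ?thesis unfolding e N_def[symmetric] J_def[symmetric] t_def[symmetric] mb_def
      by (simp add: mult.commute)
  qed
  have "sum_mset U = real j * real n - sum_mset W" using U01 sU0 sU1 by simp
  also have "\<dots> = real j * real n - 2 * m + (sum_mset S - sum_mset W)"
  proof -
    have hh: "\<And>z::real. 2 * (z / 2) = z" by simp
    have m2: "2 * m = sum_mset S" unfolding m_def by (rule hh)
    show ?thesis using m2 by linarith
  qed
  also have "\<dots> \<le> real j * real n - 2 * m + Bd (real n) m (real (n - 1 - j))" using IH by simp
  also have "\<dots> \<le> Bd (real n) ((real n * (real n - 1) - 2 * m) / 2) (real j)" by (rule key)
  also have "\<dots> \<le> Bd (real n) ((real n * (real n - 1) - 2 * m) / 2) (real (size U))"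
  proof (rule Bd_mono)
    have "size U = size U0 + j" using U01 W(2) j_def by simp
    thus "real j \<le> real (size U)" by simp
  qed auto
  also have "(real n * (real n - 1) - 2 * m) / 2 = sum_mset (spec_compl n S) / 2"
    unfolding sumC m_def using n1 by (simp add: of_nat_diff algebra_simps)
  finally show "sum_mset U \<le> Bd (real n) (sum_mset (spec_compl n S) / 2) (real (size U))" .
qed

lemma cograph_good_up: "cograph V E \<Longrightarrow> \<exists>S. good V E S \<and> up (card V) S"
proof (induct rule: cograph.induct)
  case (single v) show ?case using good_single up_single by (intro exI[of _ "{#0#}"]) simp
next
  case (union V1 E1 V2 E2)
  then obtain S1 S2 where s: "good V1 E1 S1" "up (card V1) S1" "good V2 E2 S2" "up (card V2) S2" by blast
  have "finite V1" "finite V2" using s by (auto simp: good_def simple_graph_def)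
  hence c: "card (V1 \<union> V2) = card V1 + card V2" using union.hyps(5) by (rule card_Un_disjoint)
  show ?case
    by (rule exI[of _ "S1 + S2"], unfold c, intro conjI good_union[OF s(1) s(3) union.hyps(5)] up_union[OF s(2) s(4)])
next
  case (compl V E)
  then obtain S where "good V E S" "up (card V) S" by blast
  thus ?case using good_compl up_compl unfolding good_def by blast
qed


lemma dom_int:
  fixes n K M P C :: int
  assumes K1: "1 \<le> K" and Kn: "K < n" and hP: "2 * P = K * K + K" and hC: "2 * C = n * n - n"
    and ni: "M \<le> C \<Longrightarrow> K * n < 2 * M \<and> K * n < M + P"
    and h: "M + K + 1 \<le> P + n"
  shows False
proof (cases "M \<le> C")
  case True
  hence a: "K * n < 2 * M" "K * n < M + P" using ni by auto
  have "(K - 1) * (K + 1) \<le> (K - 1) * n" using K1 Kn by (intro mult_left_mono) auto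
  hence b: "K * K - 1 \<le> K * n - n" by (simp add: algebra_simps)
  show False using a b hP h by linarith
next
  case False
  have "K * (K - 1) \<le> (n - 1) * (n - 2)" using K1 Kn by (intro mult_mono) auto
  hence b: "K * K - K \<le> n * n - 3 * n + 2" by (simp add: algebra_simps)
  show False using False b hP hC h by linarith
qed

lemma dom_int2:
  fixes n K M P C :: int
  assumes K1: "1 \<le> K" and Kn: "K \<le> n" and hP: "2 * P = K * K + K" and hC: "2 * C = n * n - n"
    and ni: "M \<le> C \<Longrightarrow> K * n < 2 * M \<and> K * n < M + P"
  shows "n \<le> M"
proof (cases "M \<le> C")
  case True
  hence a: "K * n < 2 * M" "K * n < M + P" using ni by auto
  show ?thesis
  proof (cases "K = 1")
    case True
    hence "P = 1" using hP by simp
    thus ?thesis using a True by simp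
  next
    case False
    hence "2 * n \<le> K * n" using K1 Kn by (intro mult_right_mono) auto
    thus ?thesis using a by linarith
  qed
next
  case False
  have n1: "1 \<le> n" using K1 Kn by simp
  have "0 \<le> (n - 1) * (n - 2) \<or> n = 1"
    using n1 by (cases "n = 1") (auto intro: mult_nonneg_nonneg)
  hence "2 * n - 2 \<le> n * n - n"
  proof
    assume "0 \<le> (n - 1) * (n - 2)"
    thus ?thesis by (simp add: algebra_simps)
  qed simp
  thus ?thesis using False hC by linarith
qed

lemma dom_arith:
  fixes N k m :: nat
  assumes N1: "1 \<le> N" and k1: "1 \<le> k" and kN: "k \<le> N"
    and niso: "\<not> (m \<le> N choose 2 \<and> Bd (real (Suc N)) (real m) (real k) \<le> real k * real N)"
  shows "N \<le> m" "Bd (real (Suc N)) (real m) (real k) \<le> 2 * real m - real N + real k"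
proof -
  define P where "P = Suc k choose 2"
  define C where "C = N choose 2"
  have hP: "2 * real P = real k * real k + real k" using two_choose2[of "Suc k"] unfolding P_def
    by (simp add: algebra_simps)
  have hC: "2 * real C = real N * real N - real N" using two_choose2[of N] unfolding C_def
    by (simp add: algebra_simps)
  have "real_of_int (2 * int P) = real_of_int (int k * int k + int k)" using hP by simp
  hence hPi: "2 * int P = int k * int k + int k" by (simp only: of_int_eq_iff)
  have "real_of_int (2 * int C) = real_of_int (int N * int N - int N)" using hC by simp
  hence hCi: "2 * int C = int N * int N - int N" by (simp only: of_int_eq_iff)
  have kk: "real k * (real k + 1) / 2 = real P" using hP by (simp add: algebra_simps)
  have BD: "Bd (real (Suc N)) (real m) (real k) = min (2 * real m) (min (real m + real P) (real k * real N + real k))"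
    unfolding Bd_def kk by (simp add: algebra_simps)
  have ni: "int m \<le> int C \<Longrightarrow> int k * int N < 2 * int m \<and> int k * int N < int m + int P"
  proof -
    assume "int m \<le> int C"
    hence "m \<le> N choose 2" unfolding C_def by simp
    hence "real k * real N < Bd (real (Suc N)) (real m) (real k)" using niso by simp
    hence "real k * real N < 2 * real m" "real k * real N < real m + real P" unfolding BD by auto
    hence "real (k * N) < real (2 * m)" "real (k * N) < real (m + P)" by simp_all
    hence "k * N < 2 * m" "k * N < m + P" by (simp_all only: of_nat_less_iff)
    hence "int (k * N) < int (2 * m)" "int (k * N) < int (m + P)" by (simp_all only: of_nat_less_iff)
    thus ?thesis by simp
  qed
  show "N \<le> m" using dom_int2[OF _ _ hPi hCi ni] k1 kN by simp
  show "Bd (real (Suc N)) (real m) (real k) \<le> 2 * real m - real N + real k"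
  proof (cases "k = N")
    case True
    thus ?thesis unfolding BD by simp
  next
    case False
    show ?thesis
    proof (rule ccontr)
      assume "\<not> ?thesis"
      hence "2 * real m - real N + real k < real m + real P" unfolding BD by auto
      hence "real (m + k) < real (P + N)" by simp
      hence "m + k < P + N" by (simp only: of_nat_less_iff)
      hence h: "int m + int k + 1 \<le> int P + int N" by linarith
      show False using dom_int[OF _ _ hPi hCi ni h] k1 kN False by simp
    qed
  qed
qed


lemma iso_step:
  assumes t: "threshold V F" and g: "good V F S" and v: "v \<notin> V"
  shows "threshold (insert v V) F \<and> good (insert v V) F (S + {#0#}) \<and> num_edges (insert v V) F = num_edges V F"
proof -
  have G: "simple_graph V F" using g by (simp add: good_def)
  have e: "graph_union F (\<lambda>_ _. False) = F" unfolding graph_union_def by (intro ext) simp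
  have d: "V \<inter> {v} = {}" using v by simp
  have "good (V \<union> {v}) (graph_union F (\<lambda>_ _. False)) (S + {#0#})"
    by (rule good_union[OF g good_single d])
  moreover have "num_edges (V \<union> {v}) (graph_union F (\<lambda>_ _. False)) = num_edges V F + num_edges {v} (\<lambda>_ _. False)"
    by (rule num_edges_union[OF G simple_graph_single d])
  moreover have "num_edges {v} (\<lambda>_ _. False) = 0" unfolding num_edges_def by simp
  ultimately show ?thesis using threshold.isolated[OF t v] unfolding e by simp
qed

definition domF :: "'a set \<Rightarrow> 'a \<Rightarrow> ('a \<Rightarrow> 'a \<Rightarrow> bool) \<Rightarrow> 'a \<Rightarrow> 'a \<Rightarrow> bool" where
  "domF V v F = (\<lambda>x y. F x y \<or> (x = v \<and> y \<in> V) \<or> (y = v \<and> x \<in> V))"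

lemma dom_step_graph:
  assumes t: "threshold V F" and g: "good V F S" and v: "v \<notin> V"
  shows "threshold (insert v V) (domF V v F) \<and>
    good (insert v V) (domF V v F) (spec_compl (Suc (card V)) (spec_compl (card V) S + {#0#})) \<and>
    num_edges (insert v V) (domF V v F) = num_edges V F + card V"
proof -
  have G: "simple_graph V F" using g by (simp add: good_def)
  have FV: "finite V" using G by (simp add: simple_graph_def)
  have d: "V \<inter> {v} = {}" using v by simp
  have e: "domF V v F = graph_compl (V \<union> {v}) (graph_union (graph_compl V F) (\<lambda>_ _. False))"
    unfolding domF_def graph_compl_def graph_union_def using simple_graphD[OF G] v
    by (intro ext) blast
  have g1: "good V (graph_compl V F) (spec_compl (card V) S)" by (rule good_compl[OF g])
  have g2: "good (V \<union> {v}) (graph_union (graph_compl V F) (\<lambda>_ _. False)) (spec_compl (card V) S + {#0#})"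
    by (rule good_union[OF g1 good_single d])
  have g3: "good (V \<union> {v}) (domF V v F) (spec_compl (card (V \<union> {v})) (spec_compl (card V) S + {#0#}))"
    unfolding e by (rule good_compl[OF g2])
  have cV: "card (V \<union> {v}) = Suc (card V)" using FV v by simp
  have G1: "simple_graph V (graph_compl V F)" by (rule simple_graph_compl[OF G])
  have n1: "num_edges (V \<union> {v}) (graph_union (graph_compl V F) (\<lambda>_ _. False)) = (card V choose 2) - num_edges V F"
    using num_edges_union[OF G1 simple_graph_single d] num_edges_compl[OF G]
    by (simp add: num_edges_def)
  have G2: "simple_graph (V \<union> {v}) (graph_union (graph_compl V F) (\<lambda>_ _. False))"
    by (rule simple_graph_union[OF G1 simple_graph_single])
  have le: "num_edges V F \<le> card V choose 2" by (rule num_edges_le[OF G])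
  have "num_edges (V \<union> {v}) (domF V v F) = (Suc (card V) choose 2) - ((card V choose 2) - num_edges V F)"
    unfolding e num_edges_compl[OF G2] n1 cV ..
  also have "\<dots> = num_edges V F + card V" using le
    by (simp add: numeral_2_eq_2)
  finally have ne: "num_edges (V \<union> {v}) (domF V v F) = num_edges V F + card V" .
  have th: "threshold (insert v V) (domF V v F)"
    unfolding domF_def by (rule threshold.dominating[OF t v])
  show ?thesis using th g3 ne cV by simp
qed

lemma spec_dom:
  assumes z: "0 \<in># S"
  shows "spec_compl (Suc n) (spec_compl n S + {#0#}) - {#0#}
     = add_mset (real (Suc n)) (image_mset (\<lambda>s. s + 1) (S - {#0#}))"
proof -
  have "spec_compl (Suc n) (spec_compl n S + {#0#}) - {#0#}
     = image_mset (\<lambda>s. real (Suc n) - s) (spec_compl n S)"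
    unfolding spec_compl_def[of "Suc n"] by simp
  also have "\<dots> = add_mset (real (Suc n)) (image_mset (\<lambda>s. real (Suc n) - (real n - s)) (S - {#0#}))"
    unfolding spec_compl_def by (simp add: multiset.map_comp o_def)
  also have "image_mset (\<lambda>s. real (Suc n) - (real n - s)) (S - {#0#}) = image_mset (\<lambda>s. s + 1) (S - {#0#})"
    by (rule multiset.map_cong0) simp
  finally show ?thesis .
qed

lemma sum_image_plus1: "sum_mset (image_mset (\<lambda>s::real. s + 1) U) = sum_mset U + real (size U)"
  by (induct U) auto

lemma dom_step_arith:
  fixes N k m :: nat
  assumes k1: "1 \<le> k" and Nm: "N \<le> m"
    and h: "Bd (real (Suc N)) (real m) (real k) \<le> 2 * real m - real N + real k"
  shows "Bd (real (Suc N)) (real m) (real k) \<le> real (Suc N) + real (k - 1) + Bd (real N) (real (m - N)) (real (k - 1))"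
proof -
  define K where "K = real (k - 1)"
  define M where "M = real (m - N)"
  define B where "B = Bd (real (Suc N)) (real m) (real k)"
  have rk: "real k = K + 1" unfolding K_def using k1 by (simp add: of_nat_diff)
  have rm: "real m = M + real N" unfolding M_def using Nm by (simp add: of_nat_diff)
  have b2: "B \<le> real m + real k * (real k + 1) / 2" unfolding B_def Bd_def by simp
  have b3: "B \<le> real k * real (Suc N)" unfolding B_def Bd_def by simp
  have e2: "real k * (real k + 1) / 2 = K * (K + 1) / 2 + K + 1" unfolding rk by (simp add: field_simps)
  have e3: "real k * real (Suc N) = K * real N + K + real N + 1" unfolding rk by (simp add: algebra_simps)
  have c1: "B - real (Suc N) - K \<le> 2 * M" using h rk rm unfolding B_def by simp
  have c2: "B - real (Suc N) - K \<le> M + K * (K + 1) / 2" using b2 e2 rm by simp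
  have c3: "B - real (Suc N) - K \<le> K * real N" using b3 e3 by simp
  have "B - real (Suc N) - K \<le> Bd (real N) M K" unfolding Bd_def using c1 c2 c3 by simp
  thus ?thesis unfolding B_def K_def M_def by simp
qed


lemma thr_exists:
  "\<forall>m k. m \<le> Suc N choose 2 \<longrightarrow> k \<le> N \<longrightarrow>
    (\<exists>F S. threshold {0..<Suc N} F \<and> good {0..<Suc N} F S \<and> num_edges {0..<Suc N} F = m \<and>
       (\<exists>U. U \<subseteq># S - {#0#} \<and> size U = k \<and> Bd (real (Suc N)) (real m) (real k) \<le> sum_mset U))"
proof (induct N)
  case 0
  show ?case
  proof (intro allI impI)
    fix m k :: nat assume m: "m \<le> Suc 0 choose 2" and k: "k \<le> 0"
    have m0: "m = 0" using m by (simp add: numeral_2_eq_2)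
    have k0: "k = 0" using k by simp
    have t: "threshold {0::nat} (\<lambda>_ _. False)" using threshold.isolated[OF threshold.empty, of 0] by simp
    have ne: "num_edges {0::nat} (\<lambda>_ _. False) = 0" unfolding num_edges_def by simp
    show "\<exists>F S. threshold {0..<Suc 0} F \<and> good {0..<Suc 0} F S \<and> num_edges {0..<Suc 0} F = m \<and>
       (\<exists>U. U \<subseteq># S - {#0#} \<and> size U = k \<and> Bd (real (Suc 0)) (real m) (real k) \<le> sum_mset U)"
      using t good_single[of "0::nat"] ne m0 k0
      by (intro exI[of _ "\<lambda>_ _. False"] exI[of _ "{#0#}"]) (auto simp: Bd_def intro!: exI[of _ "{#}"])
  qed
next
  case (Suc N)
  let ?V = "{0..<Suc N}" and ?v = "Suc N"
  have Vi: "{0..<Suc (Suc N)} = insert ?v ?V" by auto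
  have vV: "?v \<notin> ?V" by simp
  have cV: "card ?V = Suc N" by simp
  show ?case
  proof (intro allI impI)
    fix m k :: nat assume m: "m \<le> Suc (Suc N) choose 2" and k: "k \<le> Suc N"
    have Cs: "Suc (Suc N) choose 2 = (Suc N choose 2) + Suc N" by (simp add: numeral_2_eq_2)
    show "\<exists>F S. threshold {0..<Suc (Suc N)} F \<and> good {0..<Suc (Suc N)} F S \<and> num_edges {0..<Suc (Suc N)} F = m \<and>
       (\<exists>U. U \<subseteq># S - {#0#} \<and> size U = k \<and> Bd (real (Suc (Suc N))) (real m) (real k) \<le> sum_mset U)"
    proof (cases "m \<le> Suc N choose 2 \<and> Bd (real (Suc (Suc N))) (real m) (real k) \<le> real k * real (Suc N)")
      case True
      hence mle: "m \<le> Suc N choose 2" and bk: "Bd (real (Suc (Suc N))) (real m) (real k) \<le> real k * real (Suc N)" by auto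
      show ?thesis
      proof (cases "k \<le> N")
        case True
        obtain F S U where FS: "threshold ?V F" "good ?V F S" "num_edges ?V F = m"
          and U: "U \<subseteq># S - {#0#}" "size U = k" "Bd (real (Suc N)) (real m) (real k) \<le> sum_mset U"
          using Suc mle True by blast
        have st: "threshold (insert ?v ?V) F \<and> good (insert ?v ?V) F (S + {#0#}) \<and> num_edges (insert ?v ?V) F = num_edges ?V F"
          by (rule iso_step[OF FS(1) FS(2) vV])
        have U': "U \<subseteq># (S + {#0#}) - {#0#}" using U(1) by (simp add: subset_mset.order_trans)
        have "Bd (real (Suc (Suc N))) (real m) (real k) \<le> Bd (real (Suc N)) (real m) (real k)"
          using bk unfolding Bd_def[of "real (Suc N)"] by (simp add: Bd_def)
        thus ?thesis using st U U' FS(3) unfolding Vi by (intro exI[of _ F] exI[of _ "S + {#0#}"]) auto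
      next
        case False
        hence kk: "k = Suc N" using k by simp
        obtain F S where FS: "threshold ?V F" "good ?V F S" "num_edges ?V F = m"
          using Suc mle by blast
        have st: "threshold (insert ?v ?V) F \<and> good (insert ?v ?V) F (S + {#0#}) \<and> num_edges (insert ?v ?V) F = num_edges ?V F"
          by (rule iso_step[OF FS(1) FS(2) vV])
        have sS: "size S = k" "sum_mset S = 2 * real m" using FS(2,3) kk unfolding good_def by auto
        have "Bd (real (Suc (Suc N))) (real m) (real k) \<le> sum_mset S" unfolding sS Bd_def by simp
        thus ?thesis using st sS FS(3) unfolding Vi
          by (intro exI[of _ F] exI[of _ "S + {#0#}"]) (auto intro!: exI[of _ S])
      qed
    next
      case False
      note niso = False
      have mN: "Suc N \<le> m \<and> (1 \<le> k \<longrightarrow> Bd (real (Suc (Suc N))) (real m) (real k) \<le> 2 * real m - real (Suc N) + real k)"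
      proof (cases "k = 0")
        case True
        hence "\<not> m \<le> Suc N choose 2" using niso by (simp add: Bd_def)
        moreover have "N \<le> Suc N choose 2" by (simp add: numeral_2_eq_2)
        ultimately show ?thesis using True by simp
      next
        case False
        hence k1: "1 \<le> k" by simp
        show ?thesis using dom_arith[of "Suc N" k m] niso k1 k by simp
      qed
      define m' where "m' = m - Suc N"
      have m'le: "m' \<le> Suc N choose 2" using m Cs mN unfolding m'_def by simp
      obtain F S U where FS: "threshold ?V F" "good ?V F S" "num_edges ?V F = m'"
          and U: "U \<subseteq># S - {#0#}" "size U = k - 1" "Bd (real (Suc N)) (real m') (real (k - 1)) \<le> sum_mset U"
        using Suc m'le k by (metis diff_le_mono diff_Suc_1)
      have st: "threshold (insert ?v ?V) (domF ?V ?v F) \<and>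
        good (insert ?v ?V) (domF ?V ?v F) (spec_compl (Suc (card ?V)) (spec_compl (card ?V) S + {#0#})) \<and>
        num_edges (insert ?v ?V) (domF ?V ?v F) = num_edges ?V F + card ?V"
        by (rule dom_step_graph[OF FS(1) FS(2) vV])
      define S' where "S' = spec_compl (Suc (Suc N)) (spec_compl (Suc N) S + {#0#})"
      have z: "0 \<in># S" using FS(2) by (simp add: good_def)
      have S'e: "S' - {#0#} = add_mset (real (Suc (Suc N))) (image_mset (\<lambda>s. s + 1) (S - {#0#}))"
        unfolding S'_def by (rule spec_dom[OF z])
      have ne: "num_edges (insert ?v ?V) (domF ?V ?v F) = m" using st FS(3) mN unfolding m'_def cV by simp
      have ex: "\<exists>U. U \<subseteq># S' - {#0#} \<and> size U = k \<and> Bd (real (Suc (Suc N))) (real m) (real k) \<le> sum_mset U"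
      proof (cases "k = 0")
        case True
        show ?thesis using True by (intro exI[of _ "{#}"]) (simp add: Bd_def)
      next
        case False
        hence k1: "1 \<le> k" by simp
        define U' where "U' = add_mset (real (Suc (Suc N))) (image_mset (\<lambda>s. s + 1) U)"
        have "U' \<subseteq># S' - {#0#}" unfolding S'e U'_def using U(1)
          by (simp add: image_mset_subseteq_mono)
        moreover have "size U' = k" unfolding U'_def using U(2) k1 by simp
        moreover have "Bd (real (Suc (Suc N))) (real m) (real k) \<le> sum_mset U'"
        proof -
          have "Bd (real (Suc (Suc N))) (real m) (real k)
              \<le> real (Suc (Suc N)) + real (k - 1) + Bd (real (Suc N)) (real (m - Suc N)) (real (k - 1))"
            by (rule dom_step_arith) (use k1 mN in auto)
          also have "\<dots> \<le> real (Suc (Suc N)) + real (k - 1) + sum_mset U" using U(3) unfolding m'_def by simp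
          also have "\<dots> = sum_mset U'" unfolding U'_def using U(2) by (simp add: sum_image_plus1)
          finally show ?thesis .
        qed
        ultimately show ?thesis by blast
      qed
      show ?thesis using st ne ex unfolding Vi cV S'_def
        by (intro exI[of _ "domF ?V ?v F"] exI[of _ S']) (simp add: S'_def)
    qed
  qed
qed


lemma roots_unique:
  fixes M N :: "real multiset"
  shows "(\<Prod>a\<in>#M. [:- a, 1:]) = (\<Prod>a\<in>#N. [:- a, 1:]) \<Longrightarrow> M = N"
proof (induct M arbitrary: N)
  case empty
  show ?case
  proof (rule ccontr)
    assume "{#} \<noteq> N"
    then obtain y where y: "y \<in># N" by (metis multiset_nonemptyE)
    have "poly (\<Prod>a\<in>#N. [:- a, 1:]) y = 0" unfolding poly_prod_lin using y
      by (simp add: prod_mset_zero_iff)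
    thus False unfolding empty[symmetric] by simp
  qed
next
  case (add x M)
  have "poly (\<Prod>a\<in>#add_mset x M. [:- a, 1:]) x = 0" by simp
  hence "(\<Prod>a\<in>#N. x - a) = 0" unfolding add.prems poly_prod_lin .
  hence "x \<in># N" by (simp add: prod_mset_zero_iff) (metis diff_self imageE right_minus_eq)
  then obtain N' where N: "N = add_mset x N'" by (metis insert_DiffM)
  have E: "[:- x, 1:] * (\<Prod>a\<in>#M. [:- a, 1:]) = [:- x, 1:] * (\<Prod>a\<in>#N'. [:- a, 1:])"
    using add.prems unfolding N by simp
  have nz: "[:- x, 1:] \<noteq> (0::real poly)" by simp
  have "(\<Prod>a\<in>#M. [:- a, 1:]) = (\<Prod>a\<in>#N'. [:- a, 1:])" by (rule mult_left_cancel[OF nz, THEN iffD1, OF E])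
  hence "M = N'" by (rule add.hyps)
  thus ?case unfolding N by simp
qed

lemma lap_eigenvalues_good:
  assumes g: "good V E S"
  shows "lap_eigenvalues V E = rev (sorted_list_of_multiset S)"
proof -
  let ?ls = "rev (sorted_list_of_multiset S)"
  have cp: "char_poly (laplacian V E) = (\<Prod>s\<in>#S. [:- s, 1:])" using g by (simp add: good_def)
  have pl: "\<And>ls. (\<Prod>a\<leftarrow>ls. [:- a, 1:]) = (\<Prod>a\<in>#mset ls. [:- a, 1:])"
    by (simp add: prod_mset_prod_list[symmetric])
  have P1: "sorted_wrt (\<ge>) ?ls \<and> char_poly (laplacian V E) = (\<Prod>a\<leftarrow>?ls. [:- a, 1:])"
    unfolding pl cp by (simp add: sorted_wrt_rev sorted_sorted_list_of_multiset)
  have uq: "ls = ?ls" if "sorted_wrt (\<ge>) ls \<and> char_poly (laplacian V E) = (\<Prod>a\<leftarrow>ls. [:- a, 1:])" for ls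
  proof -
    have "mset ls = S" using that unfolding pl cp by (intro roots_unique[symmetric]) simp
    moreover have "sorted (rev ls)" using that by (simp add: sorted_wrt_rev)
    ultimately have "sorted_list_of_multiset S = rev ls"
      by (metis mset_rev sorted_list_of_multiset_mset sorted_sort_id)
    thus ?thesis by simp
  qed
  show ?thesis unfolding lap_eigenvalues_def
  proof (rule the_equality)
    show "sorted_wrt (\<ge>) ?ls \<and> char_poly (laplacian V E) = (\<Prod>a\<leftarrow>?ls. [:- a, 1:])" by (rule P1)
  next
    fix ls assume "sorted_wrt (\<ge>) ls \<and> char_poly (laplacian V E) = (\<Prod>a\<leftarrow>ls. [:- a, 1:])"
    thus "ls = ?ls" by (rule uq)
  qed
qed

lemma lap_top_sum_take:
  assumes g: "good V E S" and k: "k \<le> card V"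
  shows "lap_top_sum V E k = sum_list (take k (rev (sorted_list_of_multiset S)))"
proof -
  let ?ls = "rev (sorted_list_of_multiset S)"
  have len: "length ?ls = card V" using g unfolding good_def
    by (metis length_rev mset_sorted_list_of_multiset size_mset)
  have "sum_list (take k ?ls) = (\<Sum>i = 0..<length (take k ?ls). take k ?ls ! i)" by (rule sum_list_sum_nth)
  also have "\<dots> = (\<Sum>i<k. ?ls ! i)" using k len by (simp add: lessThan_atLeast0)
  finally show ?thesis unfolding lap_top_sum_def lap_eigenvalues_good[OF g] by simp
qed

lemma sum_sub_take:
  fixes ls :: "real list"
  shows "sorted_wrt (\<ge>) ls \<Longrightarrow> U \<subseteq># mset ls \<Longrightarrow> size U = k \<Longrightarrow> sum_mset U \<le> sum_list (take k ls)"
proof (induct ls arbitrary: U k)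
  case Nil thus ?case by simp
next
  case (Cons a rest)
  show ?case
  proof (cases k)
    case 0 thus ?thesis using Cons.prems by simp
  next
    case (Suc k')
    have ge: "\<And>y. y \<in># mset rest \<Longrightarrow> y \<le> a" using Cons.prems(1) by simp
    obtain x where x: "x \<in># U" "x \<le> a" "U - {#x#} \<subseteq># mset rest"
    proof (cases "a \<in># U")
      case True
      have "U - {#a#} \<subseteq># mset rest" using Cons.prems(2) by (simp add: subset_eq_diff_conv)
      thus ?thesis using that True by blast
    next
      case False
      have sub: "U \<subseteq># mset rest" unfolding subseteq_mset_def
      proof
        fix y
        have "count U y \<le> count (add_mset a (mset rest)) y" using Cons.prems(2)
          by (simp add: subseteq_mset_def del: count_add_mset)
        moreover have "y = a \<Longrightarrow> count U y = 0" using False by (simp add: not_in_iff)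
        ultimately show "count U y \<le> count (mset rest) y" by (cases "y = a") auto
      qed
      have "U \<noteq> {#}" using Cons.prems(3) Suc by auto
      then obtain y where y: "y \<in># U" by (cases U) auto
      have "y \<le> a" by (rule ge[OF mset_subset_eqD[OF sub y]])
      moreover have "U - {#y#} \<subseteq># mset rest" by (rule subset_mset.order_trans[OF diff_subset_eq_self sub])
      ultimately show ?thesis using that y by blast
    qed
    have sr: "sorted_wrt (\<ge>) rest" using Cons.prems(1) by simp
    have sz: "size (U - {#x#}) = k'" using size_Diff_singleton[OF x(1)] Cons.prems(3) Suc by simp
    have "sum_mset (U - {#x#}) \<le> sum_list (take k' rest)" by (rule Cons.hyps[OF sr x(3) sz])
    moreover have "sum_mset U = x + sum_mset (U - {#x#})"
    proof -
      have "U = add_mset x (U - {#x#})" using insert_DiffM[OF x(1)] by simp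
      hence "sum_mset U = sum_mset (add_mset x (U - {#x#}))" by simp
      thus ?thesis by simp
    qed
    ultimately show ?thesis using x(2) Suc by simp
  qed
qed

lemma take_sub: "mset (take k xs) \<subseteq># mset xs"
proof -
  have "mset xs = mset (take k xs) + mset (drop k xs)" by (metis append_take_drop_id mset_append)
  thus ?thesis by (metis subset_mset.add_diff_inverse diff_subset_eq_self mset_subset_eq_add_left)
qed

theorem corollary1:
  fixes V :: "'a set" and E :: "'a \<Rightarrow> 'a \<Rightarrow> bool"
  assumes "cograph V E"
  shows "spectrally_threshold_dominated V E"
  unfolding spectrally_threshold_dominated_def
proof
  fix k assume k: "k \<in> {1..card V}"
  obtain S where gS: "good V E S" and uS: "up (card V) S" using cograph_good_up[OF assms] by blast
  define n where "n = card V"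
  define m where "m = num_edges V E"
  have sumS: "sum_mset S = 2 * real m" using gS unfolding good_def m_def by simp
  have mle: "m \<le> n choose 2" unfolding m_def n_def using gS num_edges_le unfolding good_def by blast
  obtain N where nN: "n = Suc N" using k unfolding n_def by (cases "card V") auto
  let ?lsG = "rev (sorted_list_of_multiset S)"
  have kn: "k \<le> n" using k unfolding n_def by simp
  have lenG: "length ?lsG = n" using gS unfolding good_def n_def
    by (metis length_rev mset_sorted_list_of_multiset size_mset)
  have upper: "lap_top_sum V E k \<le> Bd (real n) (real m) (real k)"
  proof -
    have "lap_top_sum V E k = sum_mset (mset (take k ?lsG))"
      using lap_top_sum_take[OF gS] kn unfolding n_def by (simp add: sum_mset_sum_list)
    also have "\<dots> \<le> Bd (real n) (sum_mset S / 2) (real (size (mset (take k ?lsG))))"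
    proof -
      have "mset (take k ?lsG) \<subseteq># S" using take_sub[of k ?lsG] by simp
      thus ?thesis using uS unfolding up_def n_def by blast
    qed
    also have "size (mset (take k ?lsG)) = k" using kn lenG by simp
    finally show ?thesis unfolding sumS by simp
  qed
  obtain F ST U where FS: "threshold {0..<n} F" "good {0..<n} F ST" "num_edges {0..<n} F = m"
    and U: "U \<subseteq># ST" "size U = k" "Bd (real n) (real m) (real k) \<le> sum_mset U"
  proof (cases "k \<le> N")
    case True
    then obtain F ST U where "threshold {0..<n} F" "good {0..<n} F ST" "num_edges {0..<n} F = m"
      "U \<subseteq># ST - {#0#}" "size U = k" "Bd (real n) (real m) (real k) \<le> sum_mset U"
      using thr_exists[of N] mle unfolding nN by blast
    moreover have "U \<subseteq># ST" using calculation(4) by (meson diff_subset_eq_self subset_mset.order_trans)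
    ultimately show ?thesis using that by blast
  next
    case False
    hence kk: "k = n" using kn nN by simp
    obtain F ST where F: "threshold {0..<n} F" "good {0..<n} F ST" "num_edges {0..<n} F = m"
      using thr_exists[of N] mle unfolding nN by blast
    have "size ST = k" "sum_mset ST = 2 * real m" using F(2,3) kk unfolding good_def by auto
    moreover have "Bd (real n) (real m) (real k) \<le> 2 * real m" unfolding Bd_def by simp
    ultimately show ?thesis using that[OF F, of ST] by simp
  qed
  have cT: "card {0..<n} = card V" unfolding n_def by simp
  have lower: "sum_mset U \<le> lap_top_sum {0..<n} F k"
  proof -
    let ?lsT = "rev (sorted_list_of_multiset ST)"
    have "sum_mset U \<le> sum_list (take k ?lsT)"
      by (rule sum_sub_take) (use U in \<open>auto simp: sorted_wrt_rev sorted_sorted_list_of_multiset\<close>)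
    also have "\<dots> = lap_top_sum {0..<n} F k" using lap_top_sum_take[OF FS(2)] kn by simp
    finally show ?thesis .
  qed
  have "num_edges {0..<n} F = num_edges V E" using FS(3) unfolding m_def .
  moreover have "lap_top_sum {0..<n} F k \<ge> lap_top_sum V E k" using upper U(3) lower by linarith
  ultimately show "\<exists>(T :: nat set) F. threshold T F \<and> card T = card V \<and>
        num_edges T F = num_edges V E \<and> lap_top_sum T F k \<ge> lap_top_sum V E k"
    using FS(1) cT by blast
qed


end
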